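(* Let $\mathcal{L},\mathcal{L}'$ be distributive abstract logics and $h:\mathcal{L}\to\mathcal{L}'$ a stable logic map. Then $h$ is a lattice morphism of the associated lattices: for all $a,b\in Expr_{\mathcal{L}}$, $h(a\vee b)=_{\mathcal{L}'}h(a)\vee h(b)$ and $h(a\wedge b)=_{\mathcal{L}'}h(a)\wedge h(b)$.
   Context: An abstract logic is a triple $\mathcal{L}=(Expr_{\mathcal{L}},Th_{\mathcal{L}},\mathcal{C}_{\mathcal{L}})$ where $Expr_{\mathcal{L}}$ is a set, $Th_{\mathcal{L}}$ a non-empty set of subsets of $Expr_{\mathcal{L}}$ (theories) closed under intersections of non-empty subfamilies, and $\mathcal{C}_{\mathcal{L}}$ a set of operations on $Expr_{\mathcal{L}}$. $\mathcal{L}$ is closed under union of chains if the union of every non-empty chain of theories is a theory. A theory $T$ is prime if $T=\bigcap\mathcal{T}$ with $\mathcal{T}\subseteq Th_{\mathcal{L}}$ non-empty finite implies $T\in\mathcal{T}$; totally prime if this holds for non-empty $\mathcal{T}$ of any size. $PTh_{\mathcal{L}}$, $TPTh_{\mathcal{L}}$ denote these sets. A distributive abstract logic is one closed under union of chains with binary connectives $\vee,\wedge$ such that for all $a,b$ and all $T\in TPTh_{\mathcal{L}}$: $a\vee b\in T$ iff $a\in T$ or $b\in T$; $a\wedge b\in T$ iff $a,b\in T$. The associated lattice on $Expr_{\mathcal{L}}$ has order $a\le b$ iff every prime theory containing $a$ contains $b$, with meet $\wedge$ and join $\vee$. $x=_{\mathcal{L}'}y$ means $x\Vdash_{\mathcal{L}'}y$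 and $y\Vdash_{\mathcal{L}'}x$, where $x\Vdash_{\mathcal{L}'}y$ means every theory of $\mathcal{L}'$ containing $x$ contains $y$. A stable logic map $h:\mathcal{L}\to\mathcal{L}'$ is a function $Expr_{\mathcal{L}}\to Expr_{\mathcal{L}'}$ with $h^{-1}(T')\in Th_{\mathcal{L}}$ for all $T'\in Th_{\mathcal{L}'}$ and $h^{-1}(P')\in PTh_{\mathcal{L}}$ for all $P'\in PTh_{\mathcal{L}'}$. *)

theory Defs
  imports Main
begin

text \<open>Expressions of a logic are the elements of a type 'a (Expr = UNIV).
  A logic is given by its set of theories Th :: 'a set set; the connectives
  of a distributive logic are given as binary operations jn (join, \<or>), mt (meet, \<and>).\<close>

definition abstract_logic :: "'a set set \<Rightarrow> bool" where
  "abstract_logic Th \<longleftrightarrow> Th \<noteq> {} \<and>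
     (\<forall>F. F \<noteq> {} \<and> F \<subseteq> Th \<longrightarrow> \<Inter>F \<in> Th)"

definition closed_union_chains :: "'a set set \<Rightarrow> bool" where
  "closed_union_chains Th \<longleftrightarrow>
     (\<forall>C. C \<noteq> {} \<and> C \<subseteq> Th \<and> (\<forall>X\<in>C. \<forall>Y\<in>C. X \<subseteq> Y \<or> Y \<subseteq> X) \<longrightarrow> \<Union>C \<in> Th)"

definition prime_theory :: "'a set set \<Rightarrow> 'a set \<Rightarrow> bool" where
  "prime_theory Th T \<longleftrightarrow> T \<in> Th \<and>
     (\<forall>F. F \<subseteq> Th \<and> F \<noteq> {} \<and> finite F \<and> T = \<Inter>F \<longrightarrow> T \<in> F)"

definition totally_prime_theory :: "'a set set \<Rightarrow> 'a set \<Rightarrow> bool" where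
  "totally_prime_theory Th T \<longleftrightarrow> T \<in> Th \<and>
     (\<forall>F. F \<subseteq> Th \<and> F \<noteq> {} \<and> T = \<Inter>F \<longrightarrow> T \<in> F)"

definition distributive_logic ::
  "'a set set \<Rightarrow> ('a \<Rightarrow> 'a \<Rightarrow> 'a) \<Rightarrow> ('a \<Rightarrow> 'a \<Rightarrow> 'a) \<Rightarrow> bool" where
  "distributive_logic Th jn mt \<longleftrightarrow> abstract_logic Th \<and> closed_union_chains Th \<and>
     (\<forall>a b T. totally_prime_theory Th T \<longrightarrow>
        (jn a b \<in> T \<longleftrightarrow> a \<in> T \<or> b \<in> T) \<and>
        (mt a b \<in> T \<longleftrightarrow> a \<in> T \<and> b \<in> T))"

definition entails :: "'a set set \<Rightarrow> 'a \<Rightarrow> 'a \<Rightarrow> bool" where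
  "entails Th x y \<longleftrightarrow> (\<forall>T\<in>Th. x \<in> T \<longrightarrow> y \<in> T)"

definition logic_eq :: "'a set set \<Rightarrow> 'a \<Rightarrow> 'a \<Rightarrow> bool" where
  "logic_eq Th x y \<longleftrightarrow> entails Th x y \<and> entails Th y x"

definition stable_logic_map :: "'a set set \<Rightarrow> 'b set set \<Rightarrow> ('a \<Rightarrow> 'b) \<Rightarrow> bool" where
  "stable_logic_map Th Th' h \<longleftrightarrow>
     (\<forall>T'\<in>Th'. h -` T' \<in> Th) \<and>
     (\<forall>P'. prime_theory Th' P' \<longrightarrow> prime_theory Th (h -` P'))"

end

theory Submission
  imports Defs
begin

lemma sep_tp:
  assumes cl: "closed_union_chains Th" and T: "T \<in> Th" and x: "x \<notin> T"
  shows "\<exists>M. totally_prime_theory Th M \<and> T \<subseteq> M \<and> x \<notin> M"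
proof -
  define A where "A = {U \<in> Th. T \<subseteq> U \<and> x \<notin> U}"
  have "\<forall>C\<in>chains A. \<exists>U\<in>A. \<forall>X\<in>C. X \<subseteq> U"
  proof
    fix C assume C: "C \<in> chains A"
    show "\<exists>U\<in>A. \<forall>X\<in>C. X \<subseteq> U"
    proof (cases "C = {}")
      case True then show ?thesis using T x unfolding A_def by auto
    next
      case False
      have CA: "C \<subseteq> A" and ch: "\<forall>X\<in>C. \<forall>Y\<in>C. X \<subseteq> Y \<or> Y \<subseteq> X"
        using C unfolding chains_def chain_subset_def by auto
      have "C \<subseteq> Th" using CA unfolding A_def by auto
      hence "\<Union>C \<in> Th" using cl False ch unfolding closed_union_chains_def by simp
      moreover have "T \<subseteq> \<Union>C" "x \<notin> \<Union>C" using False C unfolding chains_def A_def by auto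
      ultimately show ?thesis unfolding A_def by blast
    qed
  qed
  from Zorn_Lemma2[OF this] obtain M where M: "M \<in> A" and mx: "\<forall>X\<in>A. M \<subseteq> X \<longrightarrow> X = M" by blast
  have "totally_prime_theory Th M"
    unfolding totally_prime_theory_def
  proof (intro conjI allI impI)
    show "M \<in> Th" using M A_def by auto
    fix F assume F: "F \<subseteq> Th \<and> F \<noteq> {} \<and> M = \<Inter>F"
    show "M \<in> F"
    proof (rule ccontr)
      assume nF: "M \<notin> F"
      have "\<forall>X\<in>F. x \<in> X"
      proof
        fix X assume X: "X \<in> F"
        have "M \<subseteq> X" using F X by blast
        moreover have "X \<noteq> M" using X nF by blast
        ultimately have "X \<notin> A" using mx by blast
        moreover have "T \<subseteq> X" using M \<open>M \<subseteq> X\<close> unfolding A_def by blast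
        moreover have "X \<in> Th" using X F by blast
        ultimately show "x \<in> X" unfolding A_def by auto
      qed
      hence "x \<in> M" using F by auto
      thus False using M A_def by auto
    qed
  qed
  thus ?thesis using M A_def by auto
qed

lemma prime_join:
  assumes d: "distributive_logic Th jn mt" and P: "prime_theory Th P"
  shows "jn a b \<in> P \<longleftrightarrow> a \<in> P \<or> b \<in> P"
proof
  have cl: "closed_union_chains Th" and ab: "abstract_logic Th"
    and tp: "\<And>a b T. totally_prime_theory Th T \<Longrightarrow> (jn a b \<in> T \<longleftrightarrow> a \<in> T \<or> b \<in> T)"
    using d unfolding distributive_logic_def by auto
  have PT: "P \<in> Th" using P prime_theory_def by auto
  define S where "S = {M. totally_prime_theory Th M \<and> P \<subseteq> M}"
  have repr: "y \<in> P" if "\<forall>M\<in>S. y \<in> M" for y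
    using sep_tp[OF cl PT, of y] that unfolding S_def by blast
  {
    assume j: "jn a b \<in> P"
    show "a \<in> P \<or> b \<in> P"
    proof (rule ccontr)
      assume n: "\<not> (a \<in> P \<or> b \<in> P)"
      define Sa where "Sa = {M\<in>S. a \<in> M}"
      define Sb where "Sb = {M\<in>S. b \<in> M}"
      have SS: "\<forall>M\<in>S. M \<in> Sa \<or> M \<in> Sb" using j tp unfolding S_def Sa_def Sb_def by auto
      have "Sa \<noteq> {}"
      proof
        assume "Sa = {}" then have "\<forall>M\<in>S. b \<in> M" using SS Sb_def by auto
        thus False using repr n by auto
      qed
      have "Sb \<noteq> {}"
      proof
        assume "Sb = {}" then have "\<forall>M\<in>S. a \<in> M" using SS Sa_def by auto
        thus False using repr n by auto
      qed
      have SaTh: "Sa \<subseteq> Th" "Sb \<subseteq> Th" unfolding Sa_def Sb_def S_def totally_prime_theory_def by auto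
      have QA: "\<Inter>Sa \<in> Th" "\<Inter>Sb \<in> Th" using ab SaTh \<open>Sa \<noteq> {}\<close> \<open>Sb \<noteq> {}\<close>
        unfolding abstract_logic_def by auto
      have eq: "P = \<Inter>{\<Inter>Sa, \<Inter>Sb}"
      proof
        show "P \<subseteq> \<Inter>{\<Inter>Sa, \<Inter>Sb}" unfolding Sa_def Sb_def S_def by auto
        show "\<Inter>{\<Inter>Sa, \<Inter>Sb} \<subseteq> P"
        proof
          fix y assume "y \<in> \<Inter>{\<Inter>Sa, \<Inter>Sb}"
          hence "\<forall>M\<in>S. y \<in> M" using SS by auto
          thus "y \<in> P" using repr by auto
        qed
      qed
      have "P \<in> {\<Inter>Sa, \<Inter>Sb}"
      proof -
        have "{\<Inter>Sa, \<Inter>Sb} \<subseteq> Th \<and> {\<Inter>Sa, \<Inter>Sb} \<noteq> {} \<and> finite {\<Inter>Sa, \<Inter>Sb} \<and> P = \<Inter>{\<Inter>Sa, \<Inter>Sb}"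
          using QA eq by simp
        thus ?thesis using P unfolding prime_theory_def by blast
      qed
      moreover have "a \<in> \<Inter>Sa" "b \<in> \<Inter>Sb" unfolding Sa_def Sb_def by auto
      ultimately show False using n by auto
    qed
  }
  {
    assume "a \<in> P \<or> b \<in> P"
    hence "\<forall>M\<in>S. jn a b \<in> M" using tp unfolding S_def by auto
    thus "jn a b \<in> P" using repr by auto
  }
qed

lemma prime_meet:
  assumes d: "distributive_logic Th jn mt" and P: "P \<in> Th"
  shows "mt a b \<in> P \<longleftrightarrow> a \<in> P \<and> b \<in> P"
proof -
  have cl: "closed_union_chains Th"
    and tp: "\<And>a b T. totally_prime_theory Th T \<Longrightarrow> (mt a b \<in> T \<longleftrightarrow> a \<in> T \<and> b \<in> T)"
    using d unfolding distributive_logic_def by auto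
  define S where "S = {M. totally_prime_theory Th M \<and> P \<subseteq> M}"
  have repr: "y \<in> P \<longleftrightarrow> (\<forall>M\<in>S. y \<in> M)" for y
    using sep_tp[OF cl P, of y] unfolding S_def by blast
  show ?thesis unfolding repr using tp unfolding S_def by auto
qed

lemma tp_prime: "totally_prime_theory Th T \<Longrightarrow> prime_theory Th T"
  unfolding totally_prime_theory_def prime_theory_def by auto

theorem lemma3p12:
  fixes Th :: "'a set set" and Th' :: "'b set set"
    and jn mt :: "'a \<Rightarrow> 'a \<Rightarrow> 'a" and jn' mt' :: "'b \<Rightarrow> 'b \<Rightarrow> 'b"
    and h :: "'a \<Rightarrow> 'b"
  assumes "distributive_logic Th jn mt"
    and "distributive_logic Th' jn' mt'"
    and "stable_logic_map Th Th' h"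
  shows "\<forall>a b. logic_eq Th' (h (jn a b)) (jn' (h a) (h b)) \<and>
               logic_eq Th' (h (mt a b)) (mt' (h a) (h b))"
proof (intro allI)
  fix a b
  have cl: "closed_union_chains Th'"
    and tp: "\<And>a b T. totally_prime_theory Th' T \<Longrightarrow> (jn' a b \<in> T \<longleftrightarrow> a \<in> T \<or> b \<in> T) \<and> (mt' a b \<in> T \<longleftrightarrow> a \<in> T \<and> b \<in> T)"
    using assms(2) unfolding distributive_logic_def by auto
  have key: "h (jn a b) \<in> M \<longleftrightarrow> jn' (h a) (h b) \<in> M"
    "h (mt a b) \<in> M \<longleftrightarrow> mt' (h a) (h b) \<in> M"
    if M: "totally_prime_theory Th' M" for M
  proof -
    have pr: "prime_theory Th (h -` M)" using assms(3) tp_prime[OF M] unfolding stable_logic_map_def by auto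
    hence inTh: "h -` M \<in> Th" unfolding prime_theory_def by auto
    show "h (jn a b) \<in> M \<longleftrightarrow> jn' (h a) (h b) \<in> M"
      using prime_join[OF assms(1) pr, of a b] tp[OF M] by auto
    show "h (mt a b) \<in> M \<longleftrightarrow> mt' (h a) (h b) \<in> M"
      using prime_meet[OF assms(1) inTh, of a b] tp[OF M] by auto
  qed
  have gen: "entails Th' x y" if "\<And>M. totally_prime_theory Th' M \<Longrightarrow> x \<in> M \<Longrightarrow> y \<in> M" for x y
    unfolding entails_def
  proof (intro ballI impI)
    fix T assume T: "T \<in> Th'" "x \<in> T"
    show "y \<in> T"
    proof (rule ccontr)
      assume "y \<notin> T"
      then obtain M where "totally_prime_theory Th' M" "T \<subseteq> M" "y \<notin> M" using sep_tp[OF cl T(1)] by blast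
      thus False using that T by auto
    qed
  qed
  show "logic_eq Th' (h (jn a b)) (jn' (h a) (h b)) \<and> logic_eq Th' (h (mt a b)) (mt' (h a) (h b))"
    unfolding logic_eq_def by (intro conjI gen; simp add: key)
qed

end
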